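(* Let $\mathcal{G}=(V,L)$ be a finite connected undirected graph with monitor set $M\subseteq V$ and non-monitor set $N=V\setminus M$, $\sigma=|N|$, and let the measurement paths $P$ be given by Controllable Arbitrary-path Probing (CAP). Let $S\subseteq N$ be nonempty and let $k$ be an integer with $1\le k\le\sigma$. Then $S$ is $k$-identifiable if and only if $\Gamma_{\mathcal{G}^*}(S,m')\ge k$.
   Context: Failure model: a failure set is any $F\subseteq N$ (monitors never fail). A measurement path fails iff it traverses at least one node of $F$. For a set of measurement paths $P$ and $F\subseteq N$, $P_F$ denotes the set of paths in $P$ traversing at least one node of $F$. Two failure sets $F_1,F_2$ are distinguishable iff $P_{F_1}\neq P_{F_2}$. A set $S\subseteq N$ is $k$-identifiable if any two failure sets $F_1,F_2\subseteq N$ with $|F_1|\le k$, $|F_2|\le k$ and $F_1\cap S\neq F_2\cap S$ are distinguishable. Under CAP, $P$ consists of all walks in $\mathcal{G}$ (paths or cycles, repeated nodes and links allowed) that start and end at monitors (possibly the same monitor). $\mathcal{N}(M)$ denotes the set of non-monitors adjacent to at least one monitor. The auxiliary graph $\mathcal{G}^*$ is obtained from $\mathcal{G}$ by deleting all monitors (and their incident links), adding a new virtual node $m'$, and adding a link between $m'$ and every node of $\mathcal{N}(M)$. For nodes $s,t$ of a graph $\mathcal{H}$, the $(s,t)$-vertex-cut $C_{\mathcal{H}}(s,t)$ is a minimum-cardinality set of nodes (other than $s,t$) whose deletion destroys all paths from $s$ to $t$; if $s$ and $t$ are adjacent, $C_{\mathcal{H}}(s,t):=V(\mathcal{H})\setminus\{t\}$.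 For a node set $S$ and a node $m\notin S$, $\Gamma_{\mathcal{H}}(S,m):=\min_{w\in S}|C_{\mathcal{H}}(w,m)|$. *)

theory Defs
  imports Main
begin

definition is_walk :: "'a set \<Rightarrow> ('a \<Rightarrow> 'a \<Rightarrow> bool) \<Rightarrow> 'a list \<Rightarrow> bool" where
  "is_walk V E p \<longleftrightarrow> p \<noteq> [] \<and> set p \<subseteq> V \<and> (\<forall>i < length p - 1. E (p ! i) (p ! Suc i))"

definition reachable :: "'a set \<Rightarrow> ('a \<Rightarrow> 'a \<Rightarrow> bool) \<Rightarrow> 'a \<Rightarrow> 'a \<Rightarrow> bool" where
  "reachable V E s t \<longleftrightarrow> (\<exists>p. is_walk V E p \<and> hd p = s \<and> last p = t)"

definition undirected_graph :: "'a set \<Rightarrow> ('a \<Rightarrow> 'a \<Rightarrow> bool) \<Rightarrow> bool" where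
  "undirected_graph V E \<longleftrightarrow> finite V \<and> (\<forall>x y. E x y \<longrightarrow> x \<in> V \<and> y \<in> V)
     \<and> (\<forall>x y. E x y \<longrightarrow> E y x) \<and> (\<forall>x. \<not> E x x)"

definition connected_graph :: "'a set \<Rightarrow> ('a \<Rightarrow> 'a \<Rightarrow> bool) \<Rightarrow> bool" where
  "connected_graph V E \<longleftrightarrow> V \<noteq> {} \<and> (\<forall>u\<in>V. \<forall>v\<in>V. reachable V E u v)"

definition CAP_paths :: "'a set \<Rightarrow> ('a \<Rightarrow> 'a \<Rightarrow> bool) \<Rightarrow> 'a set \<Rightarrow> 'a list set" where
  "CAP_paths V E M = {p. is_walk V E p \<and> hd p \<in> M \<and> last p \<in> M}"

definition failed_paths :: "'a list set \<Rightarrow> 'a set \<Rightarrow> 'a list set" where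
  "failed_paths P F = {p \<in> P. set p \<inter> F \<noteq> {}}"

definition distinguishable :: "'a list set \<Rightarrow> 'a set \<Rightarrow> 'a set \<Rightarrow> bool" where
  "distinguishable P F1 F2 \<longleftrightarrow> failed_paths P F1 \<noteq> failed_paths P F2"

definition k_identifiable :: "'a list set \<Rightarrow> 'a set \<Rightarrow> 'a set \<Rightarrow> nat \<Rightarrow> bool" where
  "k_identifiable P N S k \<longleftrightarrow>
     (\<forall>F1 F2. F1 \<subseteq> N \<and> F2 \<subseteq> N \<and> card F1 \<le> k \<and> card F2 \<le> k \<and> F1 \<inter> S \<noteq> F2 \<inter> S
        \<longrightarrow> distinguishable P F1 F2)"

definition nbr_monitors :: "'a set \<Rightarrow> ('a \<Rightarrow> 'a \<Rightarrow> bool) \<Rightarrow> 'a set \<Rightarrow> 'a set" where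
  "nbr_monitors V E M = {v \<in> V - M. \<exists>m\<in>M. E m v}"

text \<open>Auxiliary graph G*: non-monitors embedded via Some, virtual node m' = None.\<close>
definition aux_V :: "'a set \<Rightarrow> 'a set \<Rightarrow> 'a option set" where
  "aux_V V M = insert None (Some ` (V - M))"

definition aux_E :: "'a set \<Rightarrow> ('a \<Rightarrow> 'a \<Rightarrow> bool) \<Rightarrow> 'a set \<Rightarrow> 'a option \<Rightarrow> 'a option \<Rightarrow> bool" where
  "aux_E V E M x y = (case (x, y) of
      (Some a, Some b) \<Rightarrow> a \<in> V - M \<and> b \<in> V - M \<and> E a b
    | (None, Some b) \<Rightarrow> b \<in> nbr_monitors V E M
    | (Some a, None) \<Rightarrow> a \<in> nbr_monitors V E M
    | (None, None) \<Rightarrow> False)"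

definition vcut_card :: "'b set \<Rightarrow> ('b \<Rightarrow> 'b \<Rightarrow> bool) \<Rightarrow> 'b \<Rightarrow> 'b \<Rightarrow> nat" where
  "vcut_card HV HE s t =
     (if HE s t then card (HV - {t})
      else Min {card X | X. X \<subseteq> HV - {s, t} \<and> \<not> reachable (HV - X) HE s t})"

definition Gamma :: "'b set \<Rightarrow> ('b \<Rightarrow> 'b \<Rightarrow> bool) \<Rightarrow> 'b set \<Rightarrow> 'b \<Rightarrow> nat" where
  "Gamma HV HE S m = Min ((\<lambda>w. vcut_card HV HE w m) ` S)"

end

theory Submission imports Defs begin

lemma is_walk_Nil[simp]: "\<not> is_walk A E []" by (simp add: is_walk_def)

lemma is_walk_Cons[simp]: "is_walk A E (x # l) \<longleftrightarrow> x \<in> A \<and> (l = [] \<or> (E x (hd l) \<and> is_walk A E l))"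
proof (cases l)
  case Nil then show ?thesis by (simp add: is_walk_def)
next
  case (Cons y ys)
  show ?thesis unfolding is_walk_def Cons
    by (auto simp: less_Suc_eq_0_disj)
qed

lemma walk_snoc: "is_walk A E p \<Longrightarrow> E (last p) t \<Longrightarrow> t \<in> A \<Longrightarrow> is_walk A E (p @ [t])"
  by (induction p) (auto simp: hd_append)

lemma walk_ins: "is_walk A E (xs @ u # ys) \<Longrightarrow> E u t \<Longrightarrow> t \<in> A \<Longrightarrow> E t u \<Longrightarrow> is_walk A E (xs @ u # t # u # ys)"
  by (induction xs) (auto simp: hd_append)

lemma walk_mono: "is_walk A E p \<Longrightarrow> A \<subseteq> B \<Longrightarrow> is_walk B E p"
  by (auto simp: is_walk_def)

inductive rch :: "'b set \<Rightarrow> ('b \<Rightarrow> 'b \<Rightarrow> bool) \<Rightarrow> 'b \<Rightarrow> 'b \<Rightarrow> bool" for A E s where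
  refl: "s \<in> A \<Longrightarrow> rch A E s s"
| step: "rch A E s u \<Longrightarrow> E u t \<Longrightarrow> t \<in> A \<Longrightarrow> rch A E s t"

lemma rch_in: "rch A E s t \<Longrightarrow> s \<in> A \<and> t \<in> A"
  by (induction rule: rch.induct) auto

lemma rch_front: "rch A E y t \<Longrightarrow> E x y \<Longrightarrow> x \<in> A \<Longrightarrow> rch A E x t"
proof (induction rule: rch.induct)
  case refl then show ?case by (meson rch.refl rch.step)
next
  case (step u t) then show ?case by (meson rch.step)
qed

lemma rch_mono: "rch A E s t \<Longrightarrow> A \<subseteq> B \<Longrightarrow> rch B E s t"
  by (induction rule: rch.induct) (auto intro: rch.intros)

lemma rch_sym: "rch A E s t \<Longrightarrow> (\<And>x y. E x y \<Longrightarrow> E y x) \<Longrightarrow> rch A E t s"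
proof (induction rule: rch.induct)
  case refl then show ?case by (simp add: rch.refl)
next
  case (step u t) then show ?case by (meson rch_front)
qed

lemma walk_rch: "is_walk A E (x # l) \<Longrightarrow> rch A E x (last (x # l))"
proof (induction l arbitrary: x)
  case Nil then show ?case by (simp add: rch.refl)
next
  case (Cons y ys)
  then have "x \<in> A" "E x y" "is_walk A E (y # ys)" by auto
  with Cons.IH have "rch A E y (last (y # ys))" by blast
  then show ?case using \<open>x \<in> A\<close> \<open>E x y\<close> rch_front by fastforce
qed

lemma reachable_rch: "reachable A E s t \<longleftrightarrow> rch A E s t"
proof
  assume "reachable A E s t"
  then obtain p where p: "is_walk A E p" "hd p = s" "last p = t" by (auto simp: reachable_def)
  then obtain l where "p = s # l" by (cases p) auto
  with p walk_rch[of A E s l] show "rch A E s t" by simp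
next
  assume "rch A E s t"
  then show "reachable A E s t"
  proof (induction rule: rch.induct)
    case refl then show ?case unfolding reachable_def by (intro exI[of _ "[s]"]) simp
  next
    case (step u t)
    then obtain p where p: "is_walk A E p" "hd p = s" "last p = u" by (auto simp: reachable_def)
    then have "is_walk A E (p @ [t])" using step walk_snoc by metis
    moreover have "hd (p @ [t]) = s" using p by (cases p) auto
    ultimately show ?case unfolding reachable_def by (metis last_snoc)
  qed
qed

lemma rch_roundtrip: "rch A E s t \<Longrightarrow> (\<And>x y. E x y \<Longrightarrow> E y x) \<Longrightarrow>
  \<exists>xs ys. is_walk A E (xs @ t # ys) \<and> hd (xs @ t # ys) = s \<and> last (xs @ t # ys) = s"
proof (induction rule: rch.induct)
  case refl then show ?case by (intro exI[of _ "[]"]) auto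
next
  case (step u t)
  then obtain xs ys where w: "is_walk A E (xs @ u # ys)" "hd (xs @ u # ys) = s" "last (xs @ u # ys) = s"
    by blast
  have "is_walk A E ((xs @ [u]) @ t # u # ys)" using walk_ins[OF w(1)] step by simp
  moreover have "hd ((xs @ [u]) @ t # u # ys) = s" using w by (cases xs) auto
  moreover have "last ((xs @ [u]) @ t # u # ys) = s" using w by (cases ys) auto
  ultimately show ?case by blast
qed

lemma rch_firsthit:
  assumes r: "rch A E s t" and sB: "s \<notin> B"
  shows "rch (A - B) E s t \<or> (\<exists>t' \<in> B \<inter> A. \<exists>u. rch (A - B) E s u \<and> E u t')"
  using r
proof (induction rule: rch.induct)
  case refl then show ?case using sB by (simp add: rch.refl)
next
  case (step u t)
  from step.IH show ?case
  proof
    assume ru: "rch (A - B) E s u"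
    show ?case
    proof (cases "t \<in> B")
      case True
      then show ?thesis using ru step.hyps by blast
    next
      case False
      then have "rch (A - B) E s t" using ru step.hyps by (blast intro: rch.step)
      then show ?thesis by (rule disjI1)
    qed
  next
    assume "\<exists>t' \<in> B \<inter> A. \<exists>u. rch (A - B) E s u \<and> E u t'"
    then show ?case by (rule disjI2)
  qed
qed

lemma aux_sym: "undirected_graph V E \<Longrightarrow> aux_E V E M x y \<Longrightarrow> aux_E V E M y x"
  by (cases x; cases y) (auto simp: aux_E_def undirected_graph_def)

lemma auxrch_to_G:
  assumes "undirected_graph V E" "M \<subseteq> V" "F \<subseteq> V - M"
  shows "rch (aux_V V M - Some ` F) (aux_E V E M) None x \<Longrightarrow>
     x = None \<or> (\<exists>a m. x = Some a \<and> m \<in> M \<and> rch (V - F) E m a)"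
proof (induction rule: rch.induct)
  case refl then show ?case by simp
next
  case (step u t)
  show ?case
  proof (cases t)
    case None then show ?thesis by simp
  next
    case (Some b)
    with step.hyps(3) have b: "b \<in> V - M" "b \<notin> F" by (auto simp: aux_V_def)
    show ?thesis
    proof (cases u)
      case None
      with step.hyps(2) Some obtain m where "m \<in> M" "E m b"
        by (auto simp: aux_E_def nbr_monitors_def)
      moreover have "rch (V - F) E m m" using \<open>m \<in> M\<close> assms by (auto intro: rch.refl)
      ultimately show ?thesis using b Some by (blast intro: rch.step)
    next
      case (Some a)
      with step.IH obtain m where "m \<in> M" "rch (V - F) E m a" by auto
      moreover have "E a b" using step.hyps(2) Some \<open>t = Some b\<close> by (auto simp: aux_E_def)
      ultimately show ?thesis using b \<open>t = Some b\<close> by (blast intro: rch.step)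
    qed
  qed
qed

lemma capA:
  assumes "undirected_graph V E" "M \<subseteq> V" "F \<subseteq> V - M"
    and "rch (aux_V V M - Some ` F) (aux_E V E M) None (Some v)"
  shows "\<exists>p \<in> CAP_paths V E M. v \<in> set p \<and> set p \<inter> F = {}"
proof -
  obtain m where m: "m \<in> M" "rch (V - F) E m v" using auxrch_to_G[OF assms(1-3) assms(4)] by auto
  have sym: "\<And>x y. E x y \<Longrightarrow> E y x" using assms(1) by (auto simp: undirected_graph_def)
  obtain xs ys where w: "is_walk (V - F) E (xs @ v # ys)" "hd (xs @ v # ys) = m" "last (xs @ v # ys) = m"
    using rch_roundtrip[OF m(2) sym] by blast
  have "is_walk V E (xs @ v # ys)" using walk_mono[OF w(1)] by blast
  moreover have "set (xs @ v # ys) \<inter> F = {}" using w(1) unfolding is_walk_def by blast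
  ultimately show ?thesis using w m(1) unfolding CAP_paths_def by (intro bexI[of _ "xs @ v # ys"]) auto
qed

lemma capB_aux:
  assumes "undirected_graph V E" "M \<subseteq> V"
  shows "is_walk V E p \<Longrightarrow> set p \<inter> F = {} \<Longrightarrow>
    (hd p \<in> M \<or> rch (aux_V V M - Some ` F) (aux_E V E M) None (Some (hd p))) \<Longrightarrow>
    \<forall>x\<in>set p. x \<in> M \<or> rch (aux_V V M - Some ` F) (aux_E V E M) None (Some x)"
proof (induction p)
  case Nil then show ?case by simp
next
  case (Cons x l)
  show ?case
  proof (cases l)
    case Nil then show ?thesis using Cons.prems by simp
  next
    case (Cons y ys)
    have xl: "x \<in> V" "E x y" "is_walk V E l" using Cons.prems(1) \<open>l = y # ys\<close> by auto
    have yV: "y \<in> V" "y \<notin> F" using xl(3) Cons.prems(2) \<open>l = y # ys\<close> by (auto simp: is_walk_def)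
    have "y \<in> M \<or> rch (aux_V V M - Some ` F) (aux_E V E M) None (Some y)"
    proof (cases "y \<in> M")
      case False
      then have inA: "Some y \<in> aux_V V M - Some ` F" using yV by (auto simp: aux_V_def)
      show ?thesis
      proof (cases "x \<in> M")
        case True
        then have "aux_E V E M None (Some y)" using False yV xl
          by (auto simp: aux_E_def nbr_monitors_def)
        moreover have "rch (aux_V V M - Some ` F) (aux_E V E M) None None"
          by (rule rch.refl) (auto simp: aux_V_def)
        ultimately show ?thesis using inA by (blast intro: rch.step)
      next
        case False2: False
        then have "rch (aux_V V M - Some ` F) (aux_E V E M) None (Some x)" using Cons.prems(3) by simp
        moreover have "aux_E V E M (Some x) (Some y)" using False False2 xl yV by (auto simp: aux_E_def)
        ultimately show ?thesis using inA by (blast intro: rch.step)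
      qed
    qed simp
    then have "\<forall>x\<in>set l. x \<in> M \<or> rch (aux_V V M - Some ` F) (aux_E V E M) None (Some x)"
      using Cons.IH xl(3) Cons.prems(2) \<open>l = y # ys\<close> by auto
    then show ?thesis using Cons.prems(3) by auto
  qed
qed

lemma capB:
  assumes "undirected_graph V E" "M \<subseteq> V" "p \<in> CAP_paths V E M" "set p \<inter> F = {}"
    "w \<in> set p" "w \<notin> M"
  shows "rch (aux_V V M - Some ` F) (aux_E V E M) None (Some w)"
  using capB_aux[OF assms(1,2), of p F] assms(3-6) by (auto simp: CAP_paths_def)

lemma rch_two: "rch A E s x \<Longrightarrow> A = {s, t} \<Longrightarrow> \<not> E s t \<Longrightarrow> \<not> E s s \<Longrightarrow> x = s"
  by (induction rule: rch.induct) auto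

lemma aux_irrefl: "undirected_graph V E \<Longrightarrow> \<not> aux_E V E M x x"
  by (cases x) (auto simp: aux_E_def undirected_graph_def)

lemma vcut_ge:
  assumes ug: "undirected_graph V E" and w: "w \<in> V - M" and kc: "k \<le> card (V - M)"
  shows "k \<le> vcut_card (aux_V V M) (aux_E V E M) (Some w) None \<longleftrightarrow>
    aux_E V E M (Some w) None \<or>
    (\<forall>X. X \<subseteq> aux_V V M - {Some w, None} \<and> \<not> reachable (aux_V V M - X) (aux_E V E M) (Some w) None
        \<longrightarrow> k \<le> card X)"
proof (cases "aux_E V E M (Some w) None")
  case True
  have "aux_V V M - {None} = Some ` (V - M)" by (auto simp: aux_V_def)
  then have "card (aux_V V M - {None}) = card (V - M)" by (simp add: card_image)
  then show ?thesis using True kc by (simp add: vcut_card_def)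
next
  case False
  let ?C = "{card X |X. X \<subseteq> aux_V V M - {Some w, None} \<and> \<not> reachable (aux_V V M - X) (aux_E V E M) (Some w) None}"
  have fin: "finite (aux_V V M)" using ug by (auto simp: undirected_graph_def aux_V_def)
  have "?C \<subseteq> card ` Pow (aux_V V M)" by auto
  then have finC: "finite ?C" using fin by (meson finite_Pow_iff finite_imageI finite_subset)
  let ?X0 = "aux_V V M - {Some w, None}"
  have eq: "aux_V V M - ?X0 = {Some w, None}" using w by (auto simp: aux_V_def)
  have "\<not> reachable (aux_V V M - ?X0) (aux_E V E M) (Some w) None"
  proof
    assume "reachable (aux_V V M - ?X0) (aux_E V E M) (Some w) None"
    then have "rch {Some w, None} (aux_E V E M) (Some w) None" using eq by (simp add: reachable_rch)
    from rch_two[OF this _ False aux_irrefl[OF ug]] show False by simp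
  qed
  then have "card ?X0 \<in> ?C" by blast
  then have ne: "?C \<noteq> {}" by blast
  show ?thesis using False Min_ge_iff[OF finC ne, of k] by (auto simp: vcut_card_def)
qed

lemma core:
  assumes ug: "undirected_graph V E" and MV: "M \<subseteq> V"
    and F1: "F1 \<subseteq> V - M" and F2: "F2 \<subseteq> V - M" and c1: "card F1 \<le> k"
    and wF: "w \<in> F1" "w \<notin> F2"
    and cond: "aux_E V E M (Some w) None \<or>
    (\<forall>X. X \<subseteq> aux_V V M - {Some w, None} \<and> \<not> reachable (aux_V V M - X) (aux_E V E M) (Some w) None
        \<longrightarrow> k \<le> card X)"
  shows "distinguishable (CAP_paths V E M) F1 F2"
proof -
  let ?HV = "aux_V V M" and ?HE = "aux_E V E M"
  define C where "C = F1 \<inter> F2"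
  have finV: "finite V" using ug by (simp add: undirected_graph_def)
  have finF1: "finite F1" using F1 finV finite_subset by blast
  have "C \<subset> F1" using wF unfolding C_def by blast
  then have "card C < card F1" by (rule psubset_card_mono[OF finF1])
  then have cC: "card C < k" using c1 by linarith
  let ?A = "?HV - Some ` C"
  have wV: "w \<in> V - M" using wF F1 by blast
  have inA: "None \<in> ?A" "Some w \<in> ?A" using wV wF by (auto simp: aux_V_def C_def)
  have symE: "\<And>x y. ?HE x y \<Longrightarrow> ?HE y x" using aux_sym[OF ug] by blast
  have R: "rch ?A ?HE None (Some w)"
  proof (cases "?HE (Some w) None")
    case True
    then show ?thesis using inA symE by (blast intro: rch.intros)
  next
    case False
    show ?thesis
    proof (rule ccontr)
      assume nr: "\<not> rch ?A ?HE None (Some w)"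
      have "\<not> reachable ?A ?HE (Some w) None"
      proof
        assume "reachable ?A ?HE (Some w) None"
        then have "rch ?A ?HE (Some w) None" by (simp add: reachable_rch)
        then have "rch ?A ?HE None (Some w)" by (rule rch_sym) (rule symE)
        with nr show False by simp
      qed
      moreover have "Some ` C \<subseteq> ?HV - {Some w, None}" using F1 wF by (auto simp: aux_V_def C_def)
      ultimately have "k \<le> card (Some ` C)" using cond False by blast
      then show False using cC by (simp add: card_image)
    qed
  qed
  let ?B = "Some ` (F1 \<union> F2)"
  have "None \<notin> ?B" by blast
  have fh: "rch (?A - ?B) ?HE None (Some w) \<or> (\<exists>t' \<in> ?B \<inter> ?A. \<exists>u. rch (?A - ?B) ?HE None u \<and> ?HE u t')"
    by (rule rch_firsthit[OF R \<open>None \<notin> ?B\<close>])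
  have "\<not> rch (?A - ?B) ?HE None (Some w)"
  proof
    assume "rch (?A - ?B) ?HE None (Some w)"
    then have "Some w \<in> ?A - ?B" using rch_in by fast
    then show False using wF by blast
  qed
  with fh obtain t' u where t': "t' \<in> ?B \<inter> ?A" "rch (?A - ?B) ?HE None u" "?HE u t'"
    by blast
  then obtain v where v: "t' = Some v" "v \<in> F1 \<union> F2" "v \<notin> C" by (auto simp: C_def)
  show ?thesis
  proof (cases "v \<in> F2")
    case False
    have "rch (?HV - Some ` F2) ?HE None u" using t'(2) by (rule rch_mono) auto
    moreover have "t' \<in> ?HV - Some ` F2" using t'(1) v False by auto
    ultimately have "rch (?HV - Some ` F2) ?HE None (Some v)" using t'(3) v(1) by (blast intro: rch.step)
    from capA[OF ug MV F2 this] obtain p where "p \<in> CAP_paths V E M" "v \<in> set p" "set p \<inter> F2 = {}"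
      by blast
    moreover have "v \<in> F1" using v False by blast
    ultimately show ?thesis unfolding distinguishable_def failed_paths_def by blast
  next
    case True
    then have vF1: "v \<notin> F1" using v by (auto simp: C_def)
    have "rch (?HV - Some ` F1) ?HE None u" using t'(2) by (rule rch_mono) auto
    moreover have "t' \<in> ?HV - Some ` F1" using t'(1) v vF1 by auto
    ultimately have "rch (?HV - Some ` F1) ?HE None (Some v)" using t'(3) v(1) by (blast intro: rch.step)
    from capA[OF ug MV F1 this] obtain p where "p \<in> CAP_paths V E M" "v \<in> set p" "set p \<inter> F1 = {}"
      by blast
    then show ?thesis using True unfolding distinguishable_def failed_paths_def by blast
  qed
qed

theorem theorem1:
  fixes V M S :: "'a set" and E :: "'a \<Rightarrow> 'a \<Rightarrow> bool" and k :: nat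
  assumes "undirected_graph V E"
    and "connected_graph V E"
    and "M \<subseteq> V"
    and "S \<subseteq> V - M" and "S \<noteq> {}"
    and "1 \<le> k" and "k \<le> card (V - M)"
  shows "k_identifiable (CAP_paths V E M) (V - M) S k \<longleftrightarrow>
         Gamma (aux_V V M) (aux_E V E M) (Some ` S) None \<ge> k"
proof -
  note ug = assms(1) and MV = assms(3) and SN = assms(4)
  let ?HV = "aux_V V M" and ?HE = "aux_E V E M"
  let ?cond = "\<lambda>w. ?HE (Some w) None \<or>
    (\<forall>X. X \<subseteq> ?HV - {Some w, None} \<and> \<not> reachable (?HV - X) ?HE (Some w) None
        \<longrightarrow> k \<le> card X)"
  have finV: "finite V" using ug by (simp add: undirected_graph_def)
  have finS: "finite S" using SN finV finite_subset by blast
  have G: "k \<le> Gamma ?HV ?HE (Some ` S) None \<longleftrightarrow> (\<forall>w\<in>S. ?cond w)"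
  proof -
    have "k \<le> Gamma ?HV ?HE (Some ` S) None \<longleftrightarrow> (\<forall>w\<in>S. k \<le> vcut_card ?HV ?HE (Some w) None)"
      unfolding Gamma_def using finS assms(5) by (subst Min_ge_iff) auto
    also have "\<dots> \<longleftrightarrow> (\<forall>w\<in>S. ?cond w)"
    proof (rule ball_cong[OF HOL.refl])
      fix w assume "w \<in> S"
      then have "w \<in> V - M" using SN by blast
      then show "k \<le> vcut_card ?HV ?HE (Some w) None \<longleftrightarrow> ?cond w" by (rule vcut_ge[OF ug _ assms(7)])
    qed
    finally show ?thesis .
  qed
  show ?thesis
  proof
    assume "k \<le> Gamma ?HV ?HE (Some ` S) None"
    then have cw: "\<forall>w\<in>S. ?cond w" using G by (rule iffD1[rotated])
    show "k_identifiable (CAP_paths V E M) (V - M) S k"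
      unfolding k_identifiable_def
    proof (intro allI impI)
      fix F1 F2 assume h: "F1 \<subseteq> V - M \<and> F2 \<subseteq> V - M \<and> card F1 \<le> k \<and> card F2 \<le> k \<and> F1 \<inter> S \<noteq> F2 \<inter> S"
      then obtain w where "w \<in> S" and wd: "(w \<in> F1 \<and> w \<notin> F2) \<or> (w \<in> F2 \<and> w \<notin> F1)" by blast
      from wd show "distinguishable (CAP_paths V E M) F1 F2"
      proof
        assume "w \<in> F1 \<and> w \<notin> F2"
        moreover have "?cond w" using cw \<open>w \<in> S\<close> by blast
        ultimately show ?thesis using core[OF ug MV, of F1 F2 k w] h by simp
      next
        assume "w \<in> F2 \<and> w \<notin> F1"
        moreover have "?cond w" using cw \<open>w \<in> S\<close> by blast
        ultimately have "distinguishable (CAP_paths V E M) F2 F1"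
          using core[OF ug MV, of F2 F1 k w] h by simp
        then show ?thesis unfolding distinguishable_def by (rule not_sym)
      qed
    qed
  next
    assume ki: "k_identifiable (CAP_paths V E M) (V - M) S k"
    show "k \<le> Gamma ?HV ?HE (Some ` S) None"
    proof (rule ccontr)
      assume "\<not> k \<le> Gamma ?HV ?HE (Some ` S) None"
      then have "\<not> (\<forall>w\<in>S. ?cond w)" using G by (rule contrapos_nn[OF _ iffD2])
      then obtain w where w: "w \<in> S" and nc: "\<not> ?cond w" by blast
      from nc obtain X where X: "X \<subseteq> ?HV - {Some w, None}"
        "\<not> reachable (?HV - X) ?HE (Some w) None" "\<not> k \<le> card X"
        by blast
      define Y where "Y = {a. Some a \<in> X}"
      have XY: "X = Some ` Y" using X(1) unfolding Y_def by (auto simp: aux_V_def)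
      have YN: "Y \<subseteq> V - M" using X(1) unfolding Y_def by (auto simp: aux_V_def)
      have wY: "w \<notin> Y" using X(1) unfolding Y_def by auto
      have finY: "finite Y" using YN finV finite_subset by blast
      have cY: "card Y < k" using X(3) XY by (simp add: card_image)
      have wN: "w \<in> V - M" using w SN by blast
      have "failed_paths (CAP_paths V E M) (insert w Y) = failed_paths (CAP_paths V E M) Y"
      proof -
        have "set p \<inter> Y \<noteq> {}" if p: "p \<in> CAP_paths V E M" "w \<in> set p" for p
        proof
          assume "set p \<inter> Y = {}"
          from capB[OF ug MV p(1) this p(2)] wN
          have "rch (?HV - Some ` Y) ?HE None (Some w)" by blast
          then have "rch (?HV - X) ?HE (Some w) None" unfolding XY
            by (rule rch_sym) (rule aux_sym[OF ug])
          then show False using X(2) by (simp add: reachable_rch)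
        qed
        then show ?thesis unfolding failed_paths_def by blast
      qed
      moreover have "insert w Y \<subseteq> V - M" "card (insert w Y) \<le> k" "card Y \<le> k"
        "insert w Y \<inter> S \<noteq> Y \<inter> S"
        using YN wN finY wY cY w by auto
      moreover have "distinguishable (CAP_paths V E M) (insert w Y) Y"
        using ki[unfolded k_identifiable_def, rule_format, of "insert w Y" Y] YN calculation(2-5) by blast
      ultimately show False unfolding distinguishable_def by blast
    qed
  qed
qed

end
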